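(* Let $X$ be a real topological vector space, $C\subseteq X$ convex and $x_0\in C$. Then $x_0\notin\operatorname{fri} C$ if and only if there exist $y\in C$ and a neighbourhood $V_y$ of $y$ such that for every $z\in V_y\cap C$ and every $\epsilon>0$ we have $x_0+\epsilon(x_0-z)\notin C$.
   Context: For a convex set $C$, a convex subset $F\subseteq C$ is a face of $C$ if for every $x\in F$ and all $y,z\in C$ with $x\in(y,z)=\{(1-t)y+tz:t\in(0,1)\}$ we have $y,z\in F$; $F_{\min}(x,C)$ is the intersection of all faces of $C$ containing $x\in C$. The face relative interior is $\operatorname{fri} C=\{x\in C: C\subseteq\overline{F_{\min}(x,C)}\}$. *)

theory Defs
  imports "HOL-Analysis.Analysis"
begin

text \<open>Real topological vector space: a real vector space with a topology making
addition and scalar multiplication jointly continuous w.r.t. the product topology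
(stated via basic open boxes; no separation axiom assumed).\<close>
class topological_real_vector = real_vector + topological_space +
  assumes tvs_continuous_add:
    "\<And>W x y. open W \<Longrightarrow> x + y \<in> W \<Longrightarrow>
       \<exists>A B. open A \<and> open B \<and> x \<in> A \<and> y \<in> B \<and> (\<forall>a\<in>A. \<forall>b\<in>B. a + b \<in> W)"
  assumes tvs_continuous_scaleR:
    "\<And>W (t::real) x. open W \<Longrightarrow> t *\<^sub>R x \<in> W \<Longrightarrow>
       \<exists>S B. open S \<and> open B \<and> t \<in> S \<and> x \<in> B \<and> (\<forall>s\<in>S. \<forall>b\<in>B. s *\<^sub>R b \<in> W)"

definition oseg :: "'a::real_vector \<Rightarrow> 'a \<Rightarrow> 'a set" where
  "oseg y z = {(1 - t) *\<^sub>R y + t *\<^sub>R z | t. 0 < t \<and> t < 1}"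

definition is_face :: "'a::real_vector set \<Rightarrow> 'a set \<Rightarrow> bool" where
  "is_face F C \<longleftrightarrow> convex F \<and> F \<subseteq> C \<and>
     (\<forall>x\<in>F. \<forall>y\<in>C. \<forall>z\<in>C. x \<in> oseg y z \<longrightarrow> y \<in> F \<and> z \<in> F)"

definition F_min :: "'a::real_vector \<Rightarrow> 'a set \<Rightarrow> 'a set" where
  "F_min x C = \<Inter> {F. is_face F C \<and> x \<in> F}"

definition fri :: "'a::{real_vector,topological_space} set \<Rightarrow> 'a set" where
  "fri C = {x \<in> C. C \<subseteq> closure (F_min x C)}"

end

theory Submission
  imports Defs
begin

definition GG :: "'a::real_vector \<Rightarrow> 'a set \<Rightarrow> 'a set" where
  "GG x C = {z \<in> C. \<exists>e>0. x + e *\<^sub>R (x - z) \<in> C}"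

lemma conv2: "convex C \<Longrightarrow> a \<in> C \<Longrightarrow> b \<in> C \<Longrightarrow> 0 \<le> s \<Longrightarrow> s \<le> 1 \<Longrightarrow>
   (1 - s) *\<^sub>R a + s *\<^sub>R b \<in> C"
  unfolding convex_def by auto

lemma shrink:
  assumes "convex C" "x \<in> C" "x + e *\<^sub>R (x - z) \<in> C" "0 < d" "d \<le> e"
  shows "x + d *\<^sub>R (x - z) \<in> C"
proof -
  have "(1 - d/e) *\<^sub>R x + (d/e) *\<^sub>R (x + e *\<^sub>R (x - z)) \<in> C"
    using assms by (intro conv2) auto
  moreover have "(1 - d/e) *\<^sub>R x + (d/e) *\<^sub>R (x + e *\<^sub>R (x - z)) = x + d *\<^sub>R (x - z)"
    using assms by (simp add: algebra_simps)
  ultimately show ?thesis by simp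
qed

lemma face_step:
  assumes C: "convex C" and yC: "y \<in> C" and zC: "z \<in> C" and t: "0 < t" "t < 1"
    and e: "e > 0" and wC: "x + e *\<^sub>R (x - ((1 - t) *\<^sub>R y + t *\<^sub>R z)) \<in> C"
  shows "\<exists>d>0. x + d *\<^sub>R (x - y) \<in> C"
proof -
  define w where "w = x + e *\<^sub>R (x - ((1 - t) *\<^sub>R y + t *\<^sub>R z))"
  define k where "k = 1 + e * t"
  define d where "d = e * (1 - t) / k"
  have k: "k > 0" using e t by (simp add: k_def add_pos_pos)
  have d: "d > 0" using e t k by (simp add: d_def)
  have "(1 - e*t/k) *\<^sub>R w + (e*t/k) *\<^sub>R z \<in> C"
    using wC zC C e t k by (intro conv2) (auto simp: w_def k_def)
  moreover have "k *\<^sub>R (x + d *\<^sub>R (x - y)) = k *\<^sub>R ((1 - e*t/k) *\<^sub>R w + (e*t/k) *\<^sub>R z)"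
  proof -
    have "k *\<^sub>R ((1 - e*t/k) *\<^sub>R w + (e*t/k) *\<^sub>R z) = w + (e*t) *\<^sub>R z"
    proof -
      have a: "k * (1 - e*t/k) = 1" using k by (simp add: k_def field_simps)
      have b: "k * (e*t/k) = e*t" using k by simp
      show ?thesis using k by (simp add: scaleR_add_right a b)
    qed
    also have "\<dots> = (1 + e) *\<^sub>R x - (e * (1 - t)) *\<^sub>R y"
      by (simp add: w_def algebra_simps)
    also have "\<dots> = k *\<^sub>R (x + d *\<^sub>R (x - y))"
    proof -
      have kd: "k * d = e * (1 - t)" using k by (simp add: d_def)
      have "k *\<^sub>R (x + d *\<^sub>R (x - y)) = k *\<^sub>R x + (k * d) *\<^sub>R (x - y)"
        by (simp add: scaleR_add_right)
      also have "\<dots> = (1 + e) *\<^sub>R x - (e * (1 - t)) *\<^sub>R y"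
        unfolding kd by (simp add: k_def algebra_simps)
      finally show ?thesis by simp
    qed
    finally show ?thesis by metis
  qed
  then have "x + d *\<^sub>R (x - y) = (1 - e*t/k) *\<^sub>R w + (e*t/k) *\<^sub>R z"
    using k by simp
  ultimately show ?thesis using d by auto
qed

lemma GG_face:
  assumes C: "convex C" and x: "x \<in> C"
  shows "is_face (GG x C) C"
  unfolding is_face_def
proof (intro conjI ballI impI)
  show "convex (GG x C)"
    unfolding convex_def
  proof (intro ballI allI impI)
    fix a b :: 'a and u v :: real
    assume h0: "a \<in> GG x C" "b \<in> GG x C" "0 \<le> u" "0 \<le> v" "u + v = 1"
    then have h: "a \<in> GG x C \<and> b \<in> GG x C \<and> 0 \<le> u \<and> 0 \<le> v \<and> u + v = 1" by simp
    then obtain e1 e2 where e: "e1 > 0" "e2 > 0" "x + e1 *\<^sub>R (x - a) \<in> C" "x + e2 *\<^sub>R (x - b) \<in> C"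
      and abC: "a \<in> C" "b \<in> C"
      by (auto simp: GG_def)
    define e where "e = min e1 e2"
    have e0: "e > 0" using e by (simp add: e_def)
    have 1: "x + e *\<^sub>R (x - a) \<in> C" using shrink[OF C x e(3) e0] by (simp add: e_def)
    have 2: "x + e *\<^sub>R (x - b) \<in> C" using shrink[OF C x e(4) e0] by (simp add: e_def)
    have "u *\<^sub>R (x + e *\<^sub>R (x - a)) + v *\<^sub>R (x + e *\<^sub>R (x - b)) \<in> C"
      using C 1 2 h unfolding convex_def by blast
    moreover have "u *\<^sub>R (x + e *\<^sub>R (x - a)) + v *\<^sub>R (x + e *\<^sub>R (x - b))
        = x + e *\<^sub>R (x - (u *\<^sub>R a + v *\<^sub>R b))"
    proof -
      have "u *\<^sub>R (x + e *\<^sub>R (x - a)) + v *\<^sub>R (x + e *\<^sub>R (x - b))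
          = (u + v) *\<^sub>R x + e *\<^sub>R ((u + v) *\<^sub>R x - (u *\<^sub>R a + v *\<^sub>R b))"
        by (simp add: algebra_simps)
      then show ?thesis using h by simp
    qed
    moreover have "u *\<^sub>R a + v *\<^sub>R b \<in> C" using C abC h unfolding convex_def by blast
    ultimately show "u *\<^sub>R a + v *\<^sub>R b \<in> GG x C" using e0 by (auto simp: GG_def)
  qed
next
  show "GG x C \<subseteq> C" by (auto simp: GG_def)
next
  fix u y z assume u: "u \<in> GG x C" and yC: "y \<in> C" and zC: "z \<in> C" and s: "u \<in> oseg y z"
  then obtain t where t: "0 < t" "t < 1" and ut: "u = (1 - t) *\<^sub>R y + t *\<^sub>R z"
    by (auto simp: oseg_def)
  obtain e where e: "e > 0" "x + e *\<^sub>R (x - u) \<in> C" using u by (auto simp: GG_def)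
  have "\<exists>d>0. x + d *\<^sub>R (x - y) \<in> C"
    using face_step[OF C yC zC t e(1)] e(2) ut by simp
  then show "y \<in> GG x C" using yC by (auto simp: GG_def)
  have ut2: "u = (1 - (1 - t)) *\<^sub>R z + (1 - t) *\<^sub>R y" using ut by (simp add: algebra_simps)
  have "\<exists>d>0. x + d *\<^sub>R (x - z) \<in> C"
  proof (rule face_step[OF C zC yC _ _ e(1), of "1 - t"])
    show "0 < 1 - t" "1 - t < 1" using t by auto
    show "x + e *\<^sub>R (x - ((1 - (1 - t)) *\<^sub>R z + (1 - t) *\<^sub>R y)) \<in> C"
      using e(2) ut2 by simp
  qed
  then show "z \<in> GG x C" using zC by (auto simp: GG_def)
qed

lemma Fmin_eq:
  assumes C: "convex C" and x: "x \<in> C"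
  shows "F_min x C = GG x C"
proof
  have "x \<in> GG x C" using x by (auto simp: GG_def intro: exI[of _ 1])
  then show "F_min x C \<subseteq> GG x C"
    using GG_face[OF C x] unfolding F_min_def by blast
next
  show "GG x C \<subseteq> F_min x C"
    unfolding F_min_def
  proof (intro Inter_greatest subsetI, clarify)
    fix z F assume z: "z \<in> GG x C" and F: "is_face F C" and xF: "x \<in> F"
    then obtain e where e: "e > 0" "x + e *\<^sub>R (x - z) \<in> C" and zC: "z \<in> C"
      by (auto simp: GG_def)
    define t where "t = 1 / (1 + e)"
    have "x \<in> oseg z (x + e *\<^sub>R (x - z))"
      unfolding oseg_def
    proof (intro CollectI exI conjI)
      show "0 < t" "t < 1" using e by (auto simp: t_def)
      have "(1 + e) *\<^sub>R ((1 - t) *\<^sub>R z + t *\<^sub>R (x + e *\<^sub>R (x - z))) = (1 + e) *\<^sub>R x"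
        using e by (simp add: t_def algebra_simps divide_simps)
      then show "x = (1 - t) *\<^sub>R z + t *\<^sub>R (x + e *\<^sub>R (x - z))"
        using e by simp
    qed
    then show "z \<in> F" using F xF zC e(2) unfolding is_face_def by blast
  qed
qed

theorem theorem4p7:
  fixes C :: "'a::topological_real_vector set" and x0 :: 'a
  assumes "convex C" and "x0 \<in> C"
  shows "x0 \<notin> fri C \<longleftrightarrow>
    (\<exists>y\<in>C. \<exists>V. (\<exists>U. open U \<and> y \<in> U \<and> U \<subseteq> V) \<and>
       (\<forall>z\<in>V \<inter> C. \<forall>\<epsilon>>0. x0 + \<epsilon> *\<^sub>R (x0 - z) \<notin> C))" (is "_ \<longleftrightarrow> ?R")
proof -
  have "x0 \<notin> fri C \<longleftrightarrow> (\<exists>y\<in>C. y \<notin> closure (GG x0 C))"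
    using assms by (auto simp: fri_def Fmin_eq)
  also have "\<dots> \<longleftrightarrow> (\<exists>y\<in>C. \<exists>V. (\<exists>U. open U \<and> y \<in> U \<and> U \<subseteq> V) \<and> GG x0 C \<inter> V = {})"
    unfolding closure_iff_nhds_not_empty by blast
  also have "\<dots> \<longleftrightarrow> ?R"
    unfolding GG_def by (intro bex_cong refl ex_cong1) blast
  finally show ?thesis .
qed

end
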